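(* Fix $s>2$ and $\mu^*>0$. Then for every $\mu_1>\mu^*$ there exists $\epsilon>0$ such that, for all $\mu\in[\mu^*,\mu_1]$, $d\theta(f_{s,\mu})\ge\epsilon$ on $K_\mu\setminus\Delta$.
   Context: $f_{s,\mu}$ is the repressilator vector field $\dot x=\frac{\mu}{1+y^s}-x$, $\dot y=\frac{\mu}{1+z^s}-y$, $\dot z=\frac{\mu}{1+x^s}-z$ on $\mathbb{R}^3_+$. For $\mu>0$, $K_\mu:=\{(x,y,z)\colon\frac{\mu}{2+\mu^s}\le x,y,z\le\mu\}$. $\Delta:=\mathrm{span}\{(1,1,1)\}$; $\|\mathbf{x}_\perp\|^2=\tfrac23(x^2+y^2+z^2-xy-yz-zx)$; $d\theta:=\frac{1}{\sqrt3}\frac{(z-y)dx+(x-z)dy+(y-x)dz}{\|\mathbf{x}_\perp\|^2}$ on $\mathbb{R}^3\setminus\Delta$. *)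

theory Defs
  imports "HOL-Analysis.Analysis"
begin

text \<open>Points of R^3 are represented as triples (x, y, z). The Hill exponent s is real,
so y^s is written with powr (all points considered have positive coordinates).\<close>

definition repressilator :: "real \<Rightarrow> real \<Rightarrow> real \<times> real \<times> real \<Rightarrow> real \<times> real \<times> real" where
  "repressilator s \<mu> p = (case p of (x, y, z) \<Rightarrow>
     (\<mu> / (1 + y powr s) - x, \<mu> / (1 + z powr s) - y, \<mu> / (1 + x powr s) - z))"

definition K :: "real \<Rightarrow> real \<Rightarrow> (real \<times> real \<times> real) set" where
  "K s \<mu> = {(x, y, z). \<mu> / (2 + \<mu> powr s) \<le> x \<and> x \<le> \<mu> \<and>
                        \<mu> / (2 + \<mu> powr s) \<le> y \<and> y \<le> \<mu> \<and>
                        \<mu> / (2 + \<mu> powr s) \<le> z \<and> z \<le> \<mu>}"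

definition diag :: "(real \<times> real \<times> real) set" where
  "diag = {(t, t, t) | t. True}"

definition perp_norm_sq :: "real \<times> real \<times> real \<Rightarrow> real" where
  "perp_norm_sq p = (case p of (x, y, z) \<Rightarrow>
     (2/3) * (x^2 + y^2 + z^2 - x*y - y*z - z*x))"

definition dtheta :: "real \<times> real \<times> real \<Rightarrow> real \<times> real \<times> real \<Rightarrow> real" where
  "dtheta p v = (case p of (x, y, z) \<Rightarrow> case v of (a, b, c) \<Rightarrow>
     (1 / sqrt 3) * ((z - y) * a + (x - z) * b + (y - x) * c) / perp_norm_sq p)"

end

theory Submission
  imports Defs
begin

lemma num_nonneg:
  fixes h :: "real \<Rightarrow> real"
  assumes mono: "\<And>u v. u \<in> S \<Longrightarrow> v \<in> S \<Longrightarrow> u \<le> v \<Longrightarrow> h v \<le> h u"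
  and S: "x\<in>S" "y\<in>S" "z\<in>S"
  shows "0 \<le> (z-y)*h y + (x-z)*h z + (y-x)*h x"
proof -
  have r1: "(z-y)*h y + (x-z)*h z + (y-x)*h x = (z-y)*(h y - h z) + (y-x)*(h x - h z)"
    by (simp add: algebra_simps)
  have r2: "(z-y)*h y + (x-z)*h z + (y-x)*h x = (x-z)*(h z - h x) + (z-y)*(h y - h x)"
    by (simp add: algebra_simps)
  have r3: "(z-y)*h y + (x-z)*h z + (y-x)*h x = (y-x)*(h x - h y) + (x-z)*(h z - h y)"
    by (simp add: algebra_simps)
  consider "x\<le>y" "y\<le>z" | "y\<le>x" "z\<le>y" | "z\<le>x" "x\<le>y" | "x\<le>z" "y\<le>x"
    | "y\<le>z" "z\<le>x" | "z\<le>y" "x\<le>z" by linarith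
  then show ?thesis
  proof cases
    case 1
    have "h z \<le> h y" "h z \<le> h x" using 1 mono S by auto
    then show ?thesis unfolding r1 using 1
      by (intro add_nonneg_nonneg mult_nonneg_nonneg) auto
  next
    case 2
    have "h y \<le> h z" "h x \<le> h z" using 2 mono S by auto
    then show ?thesis unfolding r1 using 2
      by (intro add_nonneg_nonneg mult_nonpos_nonpos) auto
  next
    case 3
    have "h y \<le> h x" "h y \<le> h z" using 3 mono S by auto
    then show ?thesis unfolding r3 using 3
      by (intro add_nonneg_nonneg mult_nonneg_nonneg) auto
  next
    case 4
    have "h z \<le> h x" "h x \<le> h y" using 4 mono S by auto
    then show ?thesis unfolding r2 using 4
      by (intro add_nonneg_nonneg mult_nonpos_nonpos mult_nonneg_nonneg) auto
  next
    case 5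
    have "h x \<le> h z" "h x \<le> h y" using 5 mono S by auto
    then show ?thesis unfolding r2 using 5
      by (intro add_nonneg_nonneg mult_nonneg_nonneg) auto
  next
    case 6
    have "h y \<le> h z" "h z \<le> h x" using 6 mono S by auto
    then show ?thesis unfolding r1 using 6
      by (intro add_nonneg_nonneg mult_nonpos_nonpos mult_nonneg_nonneg) auto
  qed
qed

lemma ident:
  fixes x y z gx gy gz m :: real
  shows "(z-y)*(gy - x) + (x-z)*(gz - y) + (y-x)*(gx - z) = ((z-y)*(gy+m*y) + (x-z)*(gz+m*z) + (y-x)*(gx+m*x)) + m*(3/2)*((2/3)*(x^2+y^2+z^2-x*y-y*z-z*x))"
  by (simp add: field_simps power2_eq_square)

theorem proposition4:
  fixes s \<mu>star \<mu>1 :: real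
  assumes "s > 2" and "\<mu>star > 0" and "\<mu>1 > \<mu>star"
  shows "\<exists>\<epsilon>>0. \<forall>\<mu>\<in>{\<mu>star..\<mu>1}. \<forall>p \<in> K s \<mu> - diag.
           dtheta p (repressilator s \<mu> p) \<ge> \<epsilon>"
proof -
  define a where "a = \<mu>star / (2 + \<mu>1 powr s)"
  define m where "m = \<mu>star * s * a powr (s-1) / (1 + \<mu>1 powr s)^2"
  have apos: "a > 0" using assms unfolding a_def by (simp add: add_pos_nonneg)
  have pw: "\<mu>1 powr s \<ge> 0" by simp
  have "(1 + \<mu>1 powr s)^2 > 0" using pw by (intro zero_less_power) linarith
  then have mpos: "m > 0" using assms apos unfolding m_def by (intro divide_pos_pos mult_pos_pos) auto
  define \<epsilon> where "\<epsilon> = (1 / sqrt 3) * (m * (3/2))"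
  have epos: "\<epsilon> > 0" using mpos unfolding \<epsilon>_def by simp
  have main: "dtheta p (repressilator s \<mu> p) \<ge> \<epsilon>"
    if mu: "\<mu> \<in> {\<mu>star..\<mu>1}" and p: "p \<in> K s \<mu> - diag" for \<mu> p
  proof -
    obtain x y z where pxyz: "p = (x,y,z)" by (cases p) auto
    have mu0: "\<mu> > 0" using mu assms by auto
    have "\<mu> powr s \<le> \<mu>1 powr s" using mu mu0 assms by (intro powr_mono2) auto
    then have alow: "a \<le> \<mu> / (2 + \<mu> powr s)" unfolding a_def using mu assms
      by (intro frac_le) (auto simp: add_pos_nonneg)
    have xyz: "x \<in> {a..\<mu>1}" "y \<in> {a..\<mu>1}" "z \<in> {a..\<mu>1}"
      using p alow mu unfolding pxyz K_def by auto
    define h where "h t = \<mu> / (1 + t powr s) + m * t" for t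
    have hmono: "h v \<le> h u" if uv: "u \<in> {a..\<mu>1}" "v \<in> {a..\<mu>1}" "u \<le> v" for u v
    proof (rule DERIV_nonpos_imp_nonincreasing[OF uv(3)])
      fix t assume t: "u \<le> t" "t \<le> v"
      then have tpos: "t > 0" and tb: "a \<le> t" "t \<le> \<mu>1" using uv apos by auto
      have ne: "1 + t powr s \<noteq> 0" using powr_ge_zero[of t s] by linarith
      have d: "(h has_real_derivative (- (\<mu> * (s * t powr (s-1))) / (1 + t powr s)^2 + m)) (at t)"
        unfolding h_def using tpos ne
        by (auto intro!: derivative_eq_intros simp: power2_eq_square add_pos_nonneg field_simps)
      have "a powr (s-1) \<le> t powr (s-1)" using tb apos assms by (intro powr_mono2) auto
      then have n: "\<mu>star * s * a powr (s-1) \<le> \<mu> * (s * t powr (s-1))"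
        using mu assms apos by (auto intro!: mult_mono)
      have "t powr s \<le> \<mu>1 powr s" using tb tpos assms by (intro powr_mono2) auto
      then have dd: "(1 + t powr s)^2 \<le> (1 + \<mu>1 powr s)^2"
        by (intro power_mono) auto
      have "m \<le> (\<mu> * (s * t powr (s-1))) / (1 + t powr s)^2"
        unfolding m_def
      proof (rule frac_le)
        show "0 \<le> \<mu> * (s * t powr (s - 1))" using mu0 assms by simp
        show "\<mu>star * s * a powr (s - 1) \<le> \<mu> * (s * t powr (s - 1))" by fact
        show "0 < (1 + t powr s)^2" using ne by simp
        show "(1 + t powr s)^2 \<le> (1 + \<mu>1 powr s)^2" by fact
      qed
      then show "\<exists>y. (h has_real_derivative y) (at t) \<and> y \<le> 0"
        using d by (intro exI[of _ "- (\<mu> * (s * t powr (s-1))) / (1 + t powr s)^2 + m"]) auto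
    qed
    have A: "0 \<le> (z-y)*h y + (x-z)*h z + (y-x)*h x"
      by (rule num_nonneg[of "{a..\<mu>1}"]) (use hmono xyz in auto)
    define N where "N = perp_norm_sq p"
    have N: "N = (2/3) * (x^2 + y^2 + z^2 - x*y - y*z - z*x)"
      unfolding N_def pxyz perp_norm_sq_def by simp
    have nd: "\<not> (x = y \<and> y = z)" using p unfolding pxyz diag_def by auto
    have q1: "0 < (x-y)^2 + (y-z)^2" using nd by (auto simp: add_pos_nonneg add_nonneg_pos)
    have q2: "x^2 + y^2 + z^2 - x*y - y*z - z*x = ((x-y)^2 + (y-z)^2 + (z-x)^2)/2"
      by (simp add: power2_eq_square algebra_simps)
    have "0 < ((x-y)^2 + (y-z)^2 + (z-x)^2)/2"
      by (rule divide_pos_pos, rule add_pos_nonneg[OF q1], simp_all)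
    then have "x^2 + y^2 + z^2 - x*y - y*z - z*x > 0" by (subst q2)
    then have Npos: "N > 0" unfolding N by simp
    define X where "X = ((z-y)*h y + (x-z)*h z + (y-x)*h x) + m * (3/2) * N"
    have e1: "dtheta p (repressilator s \<mu> p) = (1 / sqrt 3) * ((z-y)*(\<mu> / (1 + y powr s) - x) + (x-z)*(\<mu> / (1 + z powr s) - y) + (y-x)*(\<mu> / (1 + x powr s) - z)) / N"
      unfolding pxyz dtheta_def repressilator_def N_def by simp
    have e2: "(z-y)*(\<mu> / (1 + y powr s) - x) + (x-z)*(\<mu> / (1 + z powr s) - y) + (y-x)*(\<mu> / (1 + x powr s) - z) = X"
      unfolding X_def h_def N by (rule ident)
    have eq: "dtheta p (repressilator s \<mu> p) = (1 / sqrt 3) * X / N"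
      using e1 e2 by simp
    have "(m * (3/2) * N) / N \<le> X / N"
      using A Npos unfolding X_def by (intro divide_right_mono) auto
    then have "m * (3/2) \<le> X / N"
      using Npos by simp
    then have "(1 / sqrt 3) * (m * (3/2)) \<le> (1 / sqrt 3) * (X / N)"
      by (intro mult_left_mono) auto
    then show ?thesis unfolding eq \<epsilon>_def by simp
  qed
  show ?thesis using epos main by blast
qed

end
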